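(* Let $p>2$ be an integer, $\theta\in(0,1)$, $\bm D_0\in\mathbb O(n)$, let $\bm X\in\mathbb R^{n\times r}$ have i.i.d. $\mathcal{BG}(\theta)$ entries, and $\bm Y=\bm D_0\bm X$. Then the set of global maximizers of $\bm A\mapsto\mathbb E_{\bm Y}\|\bm A\bm Y\|_p^p$ over $\bm A\in\mathbb O(n)$ is exactly $\{\bm A:\ \bm A^*=\bm D_0\bm\Pi,\ \bm\Pi\in\mathrm{SP}(n)\}$.
   Context: $\mathcal{BG}(\theta)$ (Bernoulli–Gaussian) is the law of $x=b\cdot g$ with $b\sim\mathrm{Ber}(\theta)$ and $g\sim\mathcal N(0,1)$ independent. $\mathbb O(n)$ is the group of real $n\times n$ orthogonal matrices; $\mathrm{SP}(n)$ is the group of signed permutation matrices. For a matrix $\bm M$, $\|\bm M\|_p^p=\sum_{i,j}|M_{ij}|^p$; $\bm A^*$ denotes the transpose. *)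

theory Defs
  imports "HOL-Probability.Probability"
begin

definition std_gaussian :: "real measure" where
  "std_gaussian = density lborel std_normal_density"

definition BG :: "real \<Rightarrow> real measure" where
  "BG \<theta> = distr (measure_pmf (bernoulli_pmf \<theta>) \<Otimes>\<^sub>M std_gaussian) borel
              (\<lambda>(b, g). (if b then 1 else 0) * g)"

definition BG_matrix :: "real \<Rightarrow> ('n::finite \<times> 'r::finite \<Rightarrow> real) measure" where
  "BG_matrix \<theta> = PiM UNIV (\<lambda>_. BG \<theta>)"

definition to_mat :: "('n::finite \<times> 'r::finite \<Rightarrow> real) \<Rightarrow> real^'r^'n" where
  "to_mat x = (\<chi> i j. x (i, j))"

definition entry_pnorm_pow :: "nat \<Rightarrow> real^'m::finite^'n::finite \<Rightarrow> real" where
  "entry_pnorm_pow p M = (\<Sum>i\<in>UNIV. \<Sum>j\<in>UNIV. \<bar>M $ i $ j\<bar> ^ p)"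

definition signed_perm_matrices :: "(real^'n::finite^'n) set" where
  "signed_perm_matrices = {P. \<exists>\<sigma> s. \<sigma> permutes (UNIV::'n set) \<and> (\<forall>j. s j = 1 \<or> s j = -1) \<and>
       P = (\<chi> i j. if i = \<sigma> j then s j else 0)}"

definition objective :: "nat \<Rightarrow> real \<Rightarrow> real^'n::finite^'n \<Rightarrow> real^'n^'n \<Rightarrow> ('r::finite) itself \<Rightarrow> real" where
  "objective p \<theta> D0 A _ = (\<integral>X. entry_pnorm_pow p (A ** (D0 ** (to_mat X :: real^'r^'n)))
       \<partial>(BG_matrix \<theta> :: ('n \<times> 'r \<Rightarrow> real) measure))"

end

theory Submission
  imports Defs
begin


lemma std_gaussian_prob: "prob_space std_gaussian"
  unfolding std_gaussian_def by (rule prob_space_normal_density) simp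
lemma sets_std_gaussian[measurable_cong, simp]: "sets std_gaussian = sets borel"
  by (simp add: std_gaussian_def)
lemma space_std_gaussian[simp]: "space std_gaussian = UNIV"
  by (simp add: std_gaussian_def)
lemma distributed_std_gaussian: "distributed std_gaussian lborel (\<lambda>x. x) std_normal_density"
  unfolding distributed_def
  by (auto simp: std_gaussian_def distr_id2)

lemma gauss_scale:
  assumes "\<alpha> \<noteq> 0" and [measurable]: "h \<in> borel_measurable borel"
  shows "(\<integral>\<^sup>+g. h (\<alpha> * g) \<partial>std_gaussian) = (\<integral>\<^sup>+x. ennreal (normal_density 0 \<bar>\<alpha>\<bar> x) * h x \<partial>lborel)"
proof -
  interpret prob_space std_gaussian by (rule std_gaussian_prob)
  have "distributed std_gaussian lborel (\<lambda>x. 0 + \<alpha> * x) (normal_density (0 + \<alpha>*0) (\<bar>\<alpha>\<bar>*1))"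
    by (rule normal_density_affine[OF distributed_std_gaussian]) (use assms in auto)
  then have d: "distributed std_gaussian lborel (\<lambda>x. \<alpha> * x) (normal_density 0 \<bar>\<alpha>\<bar>)" by simp
  show ?thesis using distributed_nn_integral[OF d, of h] by simp
qed

lemma gauss_two_nz:
  assumes "a \<noteq> 0" "s \<noteq> 0" and [measurable]: "h \<in> borel_measurable borel"
  shows "(\<integral>\<^sup>+y. \<integral>\<^sup>+g. h (a*y + s*g) \<partial>std_gaussian \<partial>std_gaussian)
       = (\<integral>\<^sup>+g. h (sqrt (a\<^sup>2 + s\<^sup>2) * g) \<partial>std_gaussian)"
proof -
  let ?G = std_gaussian
  let ?M = "?G \<Otimes>\<^sub>M ?G"
  interpret G: prob_space ?G by (rule std_gaussian_prob)
  interpret GG: pair_prob_space ?G ?G by unfold_locales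
  interpret M: prob_space ?M by (rule GG.prob_space_axioms)
  have dfst: "distr ?M borel fst = ?G"
    using G.distr_pair_fst[of ?G] by (subst distr_cong[of ?M ?M borel ?G]) auto
  have dsnd: "distr ?M borel snd = ?G"
  proof -
    have "distr ?M ?G snd = ?G"
    proof (intro measure_eqI)
      fix A assume A: "A \<in> sets (distr ?M ?G snd)"
      from A have "emeasure (distr ?M ?G snd) A = emeasure ?M (space ?G \<times> A)"
        by (auto simp add: emeasure_distr space_pair_measure dest: sets.sets_into_space intro!: arg_cong2[where f=emeasure])
      with A show "emeasure (distr ?M ?G snd) A = emeasure ?G A"
        using G.emeasure_pair_measure_Times[of UNIV std_gaussian A, simplified] G.emeasure_space_1 by simp
    qed simp
    then show ?thesis by (subst distr_cong[of ?M ?M borel ?G]) auto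
  qed
  have did: "distr ?M (borel \<Otimes>\<^sub>M borel) (\<lambda>x. x) = ?M"
  proof -
    have se: "sets (borel \<Otimes>\<^sub>M borel) = sets ?M"
      by (rule sets_pair_measure_cong) simp_all
    show ?thesis using distr_id2[OF se] .
  qed
  have ind: "prob_space.indep_var ?M borel fst borel snd"
    by (subst GG.indep_var_distribution_eq) (simp add: dfst dsnd did)
  have lb1: "distr ?M lborel fst = distr ?M borel fst" by (rule distr_cong) auto
  have lb2: "distr ?M lborel snd = distr ?M borel snd" by (rule distr_cong) auto
  have X: "distributed ?M lborel fst std_normal_density"
    unfolding distributed_def using dfst lb1 by (auto simp: std_gaussian_def)
  have Y: "distributed ?M lborel snd std_normal_density"
    unfolding distributed_def using dsnd lb2 by (auto simp: std_gaussian_def)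
  have X': "distributed ?M lborel (\<lambda>z. a * fst z) (normal_density 0 \<bar>a\<bar>)"
    using GG.normal_density_affine[OF X, of a 0] assms by simp
  have Y': "distributed ?M lborel (\<lambda>z. s * snd z) (normal_density 0 \<bar>s\<bar>)"
    using GG.normal_density_affine[OF Y, of s 0] assms by simp
  have ind': "prob_space.indep_var ?M borel (\<lambda>z. a * fst z) borel (\<lambda>z. s * snd z)"
    using GG.indep_var_compose[OF ind, of "\<lambda>x. a * x" borel "\<lambda>x. s*x" borel] by (simp add: o_def)
  have S: "distributed ?M lborel (\<lambda>z. a * fst z + s * snd z) (normal_density (0+0) (sqrt (\<bar>a\<bar>\<^sup>2 + \<bar>s\<bar>\<^sup>2)))"
    by (rule GG.add_indep_normal[OF ind' _ _ X' Y']) (use assms in auto)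
  have "(\<integral>\<^sup>+y. \<integral>\<^sup>+g. h (a*y + s*g) \<partial>?G \<partial>?G) = (\<integral>\<^sup>+z. h (a * fst z + s * snd z) \<partial>?M)"
    by (subst G.nn_integral_fst[symmetric]) auto
  also have "\<dots> = (\<integral>\<^sup>+x. ennreal (normal_density 0 (sqrt (a\<^sup>2 + s\<^sup>2)) x) * h x \<partial>lborel)"
    using distributed_nn_integral[OF S, of h] by simp
  also have "\<dots> = (\<integral>\<^sup>+g. h (sqrt (a\<^sup>2 + s\<^sup>2) * g) \<partial>std_gaussian)"
    using assms by (subst gauss_scale) (auto simp: add_pos_pos)
  finally show ?thesis .
qed

lemma gauss_space1[simp]: "emeasure std_gaussian UNIV = 1"
proof -
  interpret G: prob_space std_gaussian by (rule std_gaussian_prob)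
  show ?thesis using G.emeasure_space_1 by simp
qed

lemma gauss_const: "(\<integral>\<^sup>+g. c \<partial>std_gaussian) = c"
proof -
  interpret G: prob_space std_gaussian by (rule std_gaussian_prob)
  show ?thesis using G.emeasure_space_1 by simp
qed

lemma gauss_two:
  assumes [measurable]: "h \<in> borel_measurable borel"
  shows "(\<integral>\<^sup>+y. \<integral>\<^sup>+g. h (a*y + s*g) \<partial>std_gaussian \<partial>std_gaussian)
       = (\<integral>\<^sup>+g. h (sqrt (a\<^sup>2 + s\<^sup>2) * g) \<partial>std_gaussian)"
proof (cases "a = 0")
  case True
  show ?thesis
  proof (cases "s = 0")
    case True
    with \<open>a = 0\<close> show ?thesis by (simp add: gauss_const)
  next
    case False
    have "(\<integral>\<^sup>+g. h (s*g) \<partial>std_gaussian) = (\<integral>\<^sup>+g. h (\<bar>s\<bar>*g) \<partial>std_gaussian)"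
      using False by (simp add: gauss_scale)
    with \<open>a = 0\<close> show ?thesis by (simp add: gauss_const)
  qed
next
  case False
  show ?thesis
  proof (cases "s = 0")
    case True
    have "(\<integral>\<^sup>+g. h (a*g) \<partial>std_gaussian) = (\<integral>\<^sup>+g. h (\<bar>a\<bar>*g) \<partial>std_gaussian)"
      using False by (simp add: gauss_scale)
    with True show ?thesis by (simp add: gauss_const)
  next
    case False
    with \<open>a \<noteq> 0\<close> show ?thesis by (rule gauss_two_nz) simp
  qed
qed

lemma BG_prob: "0 \<le> \<theta> \<Longrightarrow> \<theta> \<le> 1 \<Longrightarrow> prob_space (BG \<theta>)"
proof -
  interpret G: prob_space std_gaussian by (rule std_gaussian_prob)
  interpret B: prob_space "measure_pmf (bernoulli_pmf \<theta>)" by (rule prob_space_measure_pmf)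
  interpret BG: pair_prob_space "measure_pmf (bernoulli_pmf \<theta>)" std_gaussian ..
  show ?thesis unfolding BG_def by (rule BG.prob_space_distr) measurable
qed

lemma BG_nn_integral:
  assumes "0 \<le> \<theta>" "\<theta> \<le> 1" and [measurable]: "f \<in> borel_measurable borel"
  shows "(\<integral>\<^sup>+y. f y \<partial>BG \<theta>) = ennreal \<theta> * (\<integral>\<^sup>+g. f g \<partial>std_gaussian) + ennreal (1-\<theta>) * f 0"
proof -
  interpret G: prob_space std_gaussian by (rule std_gaussian_prob)
  interpret B: prob_space "measure_pmf (bernoulli_pmf \<theta>)" by (rule prob_space_measure_pmf)
  interpret BG: pair_prob_space "measure_pmf (bernoulli_pmf \<theta>)" std_gaussian ..
  have "(\<integral>\<^sup>+y. f y \<partial>BG \<theta>) = (\<integral>\<^sup>+z. f ((\<lambda>(b, g). (if b then 1 else 0) * g) z) \<partial>(measure_pmf (bernoulli_pmf \<theta>) \<Otimes>\<^sub>M std_gaussian))"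
    unfolding BG_def by (rule nn_integral_distr) measurable
  also have "\<dots> = (\<integral>\<^sup>+b. \<integral>\<^sup>+g. f ((if b then 1 else 0) * g) \<partial>std_gaussian \<partial>measure_pmf (bernoulli_pmf \<theta>))"
    by (subst G.nn_integral_fst[symmetric]) (auto simp: case_prod_beta)
  also have "\<dots> = (\<Sum>b\<in>UNIV. (\<integral>\<^sup>+g. f ((if b then 1 else 0) * g) \<partial>std_gaussian) * pmf (bernoulli_pmf \<theta>) b)"
    by (rule nn_integral_measure_pmf_support) auto
  also have "\<dots> = ennreal \<theta> * (\<integral>\<^sup>+g. f g \<partial>std_gaussian) + ennreal (1-\<theta>) * f 0"
    using assms by (simp add: UNIV_bool gauss_const mult.commute)
  finally show ?thesis .
qed



definition Pw :: "real \<Rightarrow> 'a set \<Rightarrow> 'a set \<Rightarrow> real" where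
  "Pw \<theta> I S = \<theta> ^ card S * (1 - \<theta>) ^ card (I - S)"

lemma Pw_nonneg: "0 \<le> \<theta> \<Longrightarrow> \<theta> \<le> 1 \<Longrightarrow> 0 \<le> Pw \<theta> I S"
  by (simp add: Pw_def)

lemma Pw_insert_out:
  assumes "finite I" "i \<notin> I" "S \<subseteq> I"
  shows "Pw \<theta> (insert i I) S = (1 - \<theta>) * Pw \<theta> I S"
proof -
  have "insert i I - S = insert i (I - S)" using assms by auto
  then have "card (insert i I - S) = Suc (card (I - S))" using assms by auto
  then show ?thesis by (simp add: Pw_def)
qed

lemma Pw_insert_in:
  assumes "finite I" "i \<notin> I" "S \<subseteq> I"
  shows "Pw \<theta> (insert i I) (insert i S) = \<theta> * Pw \<theta> I S"
proof -
  have "insert i I - insert i S = I - S" using assms by auto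
  moreover have "i \<notin> S" using assms by auto
  moreover have "card (insert i S) = Suc (card S)"
    using \<open>i \<notin> S\<close> finite_subset[OF assms(3) assms(1)] by simp
  ultimately show ?thesis by (simp add: Pw_def)
qed

lemma sum_Pow_insert:
  assumes "finite I" "i \<notin> I"
  shows "(\<Sum>S\<in>Pow (insert i I). f S) = (\<Sum>S\<in>Pow I. f S) + (\<Sum>S\<in>Pow I. f (insert i S))"
proof -
  have d: "Pow I \<inter> insert i ` Pow I = {}" using assms by auto
  have inj: "inj_on (insert i) (Pow I)"
    using assms by (auto simp: inj_on_def)
  show ?thesis
    unfolding Pow_insert using assms d
    by (subst sum.union_disjoint) (auto simp: sum.reindex[OF inj])
qed

lemma sets_BG[measurable_cong, simp]: "sets (BG \<theta>) = sets borel"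
  by (simp add: BG_def)

lemma meas_gauss_int[measurable]:
  assumes [measurable]: "h \<in> borel_measurable borel"
  shows "(\<lambda>y. \<integral>\<^sup>+g. h (a*y + c*g) \<partial>std_gaussian) \<in> borel_measurable borel"
proof -
  interpret G: prob_space std_gaussian by (rule std_gaussian_prob)
  have "(\<lambda>y. \<integral>\<^sup>+g. (\<lambda>(y,g). h (a*y + c*g)) (y,g) \<partial>std_gaussian) \<in> borel_measurable borel"
    by (rule G.borel_measurable_nn_integral_fst) measurable
  then show ?thesis by simp
qed

lemma meas_gauss_int_BG[measurable]:
  assumes [measurable]: "h \<in> borel_measurable borel"
  shows "(\<lambda>y. \<integral>\<^sup>+g. h (a*y + c*g) \<partial>std_gaussian) \<in> borel_measurable (BG \<theta>)"
proof -
  have "borel_measurable (BG \<theta>) = borel_measurable borel" by (rule measurable_cong_sets) simp_all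
  then show ?thesis using meas_gauss_int[OF assms] by simp
qed

lemma ennreal_aux:
  assumes "0 \<le> p" "0 \<le> \<theta>" "\<theta> \<le> 1"
  shows "ennreal p * (ennreal \<theta> * A + ennreal (1-\<theta>) * B) = ennreal ((1-\<theta>)*p) * B + ennreal (\<theta>*p) * A"
proof -
  have 1: "ennreal ((1-\<theta>)*p) = ennreal (1-\<theta>) * ennreal p" using assms by (simp add: ennreal_mult)
  have 2: "ennreal (\<theta>*p) = ennreal \<theta> * ennreal p" using assms by (simp add: ennreal_mult)
  show ?thesis unfolding 1 2 by (simp add: distrib_left mult.commute mult.left_commute add.commute)
qed

lemma key:
  fixes w :: "'a \<Rightarrow> real"
  assumes "finite I" "0 \<le> \<theta>" "\<theta> \<le> 1"
  shows "h \<in> borel_measurable borel \<Longrightarrow>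
    (\<integral>\<^sup>+x. h (\<Sum>k\<in>I. w k * x k) \<partial>PiM I (\<lambda>_. BG \<theta>)) =
    (\<Sum>S\<in>Pow I. ennreal (Pw \<theta> I S) * (\<integral>\<^sup>+g. h (sqrt (\<Sum>k\<in>S. (w k)\<^sup>2) * g) \<partial>std_gaussian))"
  using assms(1)
proof (induction I arbitrary: h rule: finite_induct)
  interpret product_prob_space "\<lambda>_::'a. BG \<theta>"
    by (simp add: product_prob_space_def product_sigma_finite_def prob_space_imp_sigma_finite BG_prob assms
      product_prob_space_axioms_def)
  case empty
  then show ?case by (simp add: PiM_empty Pw_def gauss_const)
next
  interpret product_prob_space "\<lambda>_::'a. BG \<theta>"
    by (simp add: product_prob_space_def product_sigma_finite_def prob_space_imp_sigma_finite BG_prob assms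
      product_prob_space_axioms_def)
  case (insert i I)
  note [measurable] = insert.prems
  let ?s = "\<lambda>S. sqrt (\<Sum>k\<in>S. (w k)\<^sup>2)"
  let ?G = std_gaussian
  have "(\<integral>\<^sup>+x. h (\<Sum>k\<in>insert i I. w k * x k) \<partial>PiM (insert i I) (\<lambda>_. BG \<theta>))
     = (\<integral>\<^sup>+y. \<integral>\<^sup>+x. h (\<Sum>k\<in>insert i I. w k * (x(i:=y)) k) \<partial>PiM I (\<lambda>_. BG \<theta>) \<partial>BG \<theta>)"
    apply (rule product_nn_integral_insert_rev)
    using insert.hyps apply auto[2]
    apply measurable
    done
  also have "\<dots> = (\<integral>\<^sup>+y. \<integral>\<^sup>+x. h (w i * y + (\<Sum>k\<in>I. w k * x k)) \<partial>PiM I (\<lambda>_. BG \<theta>) \<partial>BG \<theta>)"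
  proof -
    have "\<And>x y. (\<Sum>k\<in>insert i I. w k * (x(i:=y)) k) = w i * y + (\<Sum>k\<in>I. w k * x k)"
      using insert by (auto intro!: sum.cong)
    then show ?thesis by simp
  qed
  also have "\<dots> = (\<integral>\<^sup>+y. (\<Sum>S\<in>Pow I. ennreal (Pw \<theta> I S) * (\<integral>\<^sup>+g. h (w i * y + ?s S * g) \<partial>?G)) \<partial>BG \<theta>)"
    by (subst insert.IH) auto
  also have "\<dots> = (\<Sum>S\<in>Pow I. ennreal (Pw \<theta> I S) * (\<integral>\<^sup>+y. (\<integral>\<^sup>+g. h (w i * y + ?s S * g) \<partial>?G) \<partial>BG \<theta>))"
    apply (subst nn_integral_sum)
    apply simp
    apply measurable
    apply (rule sum.cong[OF refl])
    apply (rule nn_integral_cmult)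
    apply measurable
    done
  also have "\<dots> = (\<Sum>S\<in>Pow I. ennreal (Pw \<theta> I S) * (ennreal \<theta> * (\<integral>\<^sup>+g. h (?s (insert i S) * g) \<partial>?G)
                      + ennreal (1-\<theta>) * (\<integral>\<^sup>+g. h (?s S * g) \<partial>?G)))"
  proof (rule sum.cong[OF refl])
    fix S assume S: "S \<in> Pow I"
    have fin: "finite S" using S insert finite_subset by blast
    have iS: "i \<notin> S" using S insert by auto
    have sq: "sqrt ((w i)\<^sup>2 + (?s S)\<^sup>2) = ?s (insert i S)"
      using fin iS by (simp add: sum_nonneg)
    have "(\<integral>\<^sup>+y. (\<integral>\<^sup>+g. h (w i * y + ?s S * g) \<partial>?G) \<partial>BG \<theta>)
       = ennreal \<theta> * (\<integral>\<^sup>+y. \<integral>\<^sup>+g. h (w i * y + ?s S * g) \<partial>?G \<partial>?G) + ennreal (1-\<theta>) * (\<integral>\<^sup>+g. h (w i * 0 + ?s S * g) \<partial>?G)"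
      by (rule BG_nn_integral) (use assms in auto)
    also have "\<dots> = ennreal \<theta> * (\<integral>\<^sup>+g. h (?s (insert i S) * g) \<partial>?G) + ennreal (1-\<theta>) * (\<integral>\<^sup>+g. h (?s S * g) \<partial>?G)"
      by (simp add: gauss_two sq)
    finally show "ennreal (Pw \<theta> I S) * (\<integral>\<^sup>+y. (\<integral>\<^sup>+g. h (w i * y + ?s S * g) \<partial>?G) \<partial>BG \<theta>) =
       ennreal (Pw \<theta> I S) * (ennreal \<theta> * (\<integral>\<^sup>+g. h (?s (insert i S) * g) \<partial>?G)
                      + ennreal (1-\<theta>) * (\<integral>\<^sup>+g. h (?s S * g) \<partial>?G))" by simp
  qed
  also have "\<dots> = (\<Sum>S\<in>Pow I. ennreal (Pw \<theta> (insert i I) S) * (\<integral>\<^sup>+g. h (?s S * g) \<partial>?G))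
                + (\<Sum>S\<in>Pow I. ennreal (Pw \<theta> (insert i I) (insert i S)) * (\<integral>\<^sup>+g. h (?s (insert i S) * g) \<partial>?G))"
  proof -
    have "\<And>S. S \<in> Pow I \<Longrightarrow> ennreal (Pw \<theta> I S) * (ennreal \<theta> * (\<integral>\<^sup>+g. h (?s (insert i S) * g) \<partial>?G)
                      + ennreal (1-\<theta>) * (\<integral>\<^sup>+g. h (?s S * g) \<partial>?G))
       = ennreal (Pw \<theta> (insert i I) S) * (\<integral>\<^sup>+g. h (?s S * g) \<partial>?G)
         + ennreal (Pw \<theta> (insert i I) (insert i S)) * (\<integral>\<^sup>+g. h (?s (insert i S) * g) \<partial>?G)"
    proof -
      fix S assume "S \<in> Pow I"
      then have SI: "S \<subseteq> I" by simp
      show "?thesis S"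
        unfolding Pw_insert_out[OF insert.hyps(1,2) SI] Pw_insert_in[OF insert.hyps(1,2) SI]
        by (rule ennreal_aux[OF Pw_nonneg]) (use assms in auto)
    qed
    then have "(\<Sum>S\<in>Pow I. ennreal (Pw \<theta> I S) * (ennreal \<theta> * (\<integral>\<^sup>+g. h (?s (insert i S) * g) \<partial>?G)
                      + ennreal (1-\<theta>) * (\<integral>\<^sup>+g. h (?s S * g) \<partial>?G)))
       = (\<Sum>S\<in>Pow I. ennreal (Pw \<theta> (insert i I) S) * (\<integral>\<^sup>+g. h (?s S * g) \<partial>?G)
         + ennreal (Pw \<theta> (insert i I) (insert i S)) * (\<integral>\<^sup>+g. h (?s (insert i S) * g) \<partial>?G))"
      by (rule sum.cong[OF refl])
    then show ?thesis by (simp only: sum.distrib)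
  qed
  also have "\<dots> = (\<Sum>S\<in>Pow (insert i I). ennreal (Pw \<theta> (insert i I) S) * (\<integral>\<^sup>+g. h (?s S * g) \<partial>?G))"
    using sum_Pow_insert[OF insert.hyps(1,2), of "\<lambda>S. ennreal (Pw \<theta> (insert i I) S) * (\<integral>\<^sup>+g. h (?s S * g) \<partial>?G)"]
    by (simp only:)
  finally show ?case .
qed



definition cmom :: "nat \<Rightarrow> real" where
  "cmom p = (\<integral>x. \<bar>x\<bar> ^ p \<partial>std_gaussian)"

lemma integrable_abs_pow: "integrable std_gaussian (\<lambda>x. \<bar>x\<bar> ^ p)"
  unfolding std_gaussian_def
  by (subst integrable_density) (auto simp: integrable_std_normal_moment_abs)

lemma cmom_pos: "0 < cmom p"
proof (cases "even p")
  case True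
  then obtain k where "p = 2 * k" by blast
  then show ?thesis unfolding cmom_def std_gaussian_def
    using std_normal_distribution_even_moments_abs[of k] by simp
next
  case False
  then obtain k where "p = 2 * k + 1" by (metis oddE)
  then show ?thesis unfolding cmom_def std_gaussian_def
    using std_normal_distribution_odd_moments_abs[of k] by simp
qed

lemma gauss_pow: "(\<integral>\<^sup>+g. ennreal (\<bar>\<sigma> * g\<bar> ^ p) \<partial>std_gaussian) = ennreal (\<bar>\<sigma>\<bar> ^ p * cmom p)"
proof -
  have "(\<integral>\<^sup>+g. ennreal (\<bar>\<sigma> * g\<bar> ^ p) \<partial>std_gaussian) = (\<integral>\<^sup>+g. ennreal (\<bar>\<sigma>\<bar> ^ p) * ennreal (\<bar>g\<bar> ^ p) \<partial>std_gaussian)"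
    by (simp add: abs_mult power_mult_distrib ennreal_mult)
  also have "\<dots> = ennreal (\<bar>\<sigma>\<bar> ^ p) * (\<integral>\<^sup>+g. ennreal (\<bar>g\<bar> ^ p) \<partial>std_gaussian)"
    by (rule nn_integral_cmult) simp
  also have "(\<integral>\<^sup>+g. ennreal (\<bar>g\<bar> ^ p) \<partial>std_gaussian) = ennreal (cmom p)"
    unfolding cmom_def by (rule nn_integral_eq_integral[OF integrable_abs_pow]) simp
  finally show ?thesis using less_imp_le[OF cmom_pos[of p]] by (simp add: ennreal_mult)
qed

lemma Pw_sum1: "finite I \<Longrightarrow> (\<Sum>S\<in>Pow I. Pw \<theta> I S) = 1"
proof (induction I rule: finite_induct)
  case empty then show ?case by (simp add: Pw_def)
next
  case (insert i I)
  have "(\<Sum>S\<in>Pow (insert i I). Pw \<theta> (insert i I) S)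
     = (\<Sum>S\<in>Pow I. Pw \<theta> (insert i I) S) + (\<Sum>S\<in>Pow I. Pw \<theta> (insert i I) (insert i S))"
    by (rule sum_Pow_insert[OF insert.hyps])
  also have "\<dots> = (\<Sum>S\<in>Pow I. (1-\<theta>) * Pw \<theta> I S) + (\<Sum>S\<in>Pow I. \<theta> * Pw \<theta> I S)"
    using insert.hyps by (intro arg_cong2[where f="(+)"] sum.cong) (auto simp: Pw_insert_out Pw_insert_in)
  also have "\<dots> = 1" using insert.IH by (simp add: sum_distrib_left[symmetric])
  finally show ?case .
qed

lemma Pw_sum_lin: "finite I \<Longrightarrow> (\<Sum>S\<in>Pow I. Pw \<theta> I S * (\<Sum>k\<in>S. u k)) = \<theta> * (\<Sum>k\<in>I. u k)"
proof (induction I rule: finite_induct)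
  case empty then show ?case by (simp add: Pw_def)
next
  case (insert i I)
  have "(\<Sum>S\<in>Pow (insert i I). Pw \<theta> (insert i I) S * (\<Sum>k\<in>S. u k))
     = (\<Sum>S\<in>Pow I. Pw \<theta> (insert i I) S * (\<Sum>k\<in>S. u k)) + (\<Sum>S\<in>Pow I. Pw \<theta> (insert i I) (insert i S) * (\<Sum>k\<in>insert i S. u k))"
    by (rule sum_Pow_insert[OF insert.hyps])
  also have "\<dots> = (\<Sum>S\<in>Pow I. (1-\<theta>) * (Pw \<theta> I S * (\<Sum>k\<in>S. u k))) + (\<Sum>S\<in>Pow I. \<theta> * (Pw \<theta> I S * (\<Sum>k\<in>S. u k)) + \<theta> * u i * Pw \<theta> I S)"
  proof (intro arg_cong2[where f="(+)"] sum.cong refl)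
    fix S assume "S \<in> Pow I"
    then have SI: "S \<subseteq> I" by simp
    then have "i \<notin> S" "finite S" using insert.hyps finite_subset by auto
    then show "Pw \<theta> (insert i I) (insert i S) * (\<Sum>k\<in>insert i S. u k) = \<theta> * (Pw \<theta> I S * (\<Sum>k\<in>S. u k)) + \<theta> * u i * Pw \<theta> I S"
      using Pw_insert_in[OF insert.hyps SI] by (simp add: algebra_simps)
  qed (use insert.hyps in \<open>auto simp: Pw_insert_out\<close>)
  also have "\<dots> = (\<Sum>S\<in>Pow I. (1-\<theta>) * (Pw \<theta> I S * (\<Sum>k\<in>S. u k)) + (\<theta> * (Pw \<theta> I S * (\<Sum>k\<in>S. u k)) + \<theta> * u i * Pw \<theta> I S))"
    by (rule sum.distrib[symmetric])
  also have "\<dots> = (\<Sum>S\<in>Pow I. Pw \<theta> I S * (\<Sum>k\<in>S. u k) + \<theta> * u i * Pw \<theta> I S)"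
    by (rule sum.cong) (auto simp: algebra_simps)
  also have "\<dots> = (\<Sum>S\<in>Pow I. Pw \<theta> I S * (\<Sum>k\<in>S. u k)) + \<theta> * u i * (\<Sum>S\<in>Pow I. Pw \<theta> I S)"
    by (simp add: sum.distrib sum_distrib_left)
  also have "\<dots> = \<theta> * (\<Sum>k\<in>insert i I. u k)"
    using insert.IH insert.hyps Pw_sum1[OF insert.hyps(1), of \<theta>]
    by (simp add: algebra_simps)
  finally show ?case .
qed




definition Tval :: "real \<Rightarrow> nat \<Rightarrow> ('q::finite \<Rightarrow> real) \<Rightarrow> real" where
  "Tval \<theta> p w = (\<Sum>S\<in>Pow UNIV. Pw \<theta> UNIV S * sqrt (\<Sum>k\<in>S. (w k)\<^sup>2) ^ p)"

lemma sqrt_pow_le: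
  assumes "0 \<le> a" "a \<le> 1" "2 \<le> p"
  shows "sqrt a ^ p \<le> a"
proof -
  have "sqrt a ^ p \<le> sqrt a ^ 2"
    by (rule power_decreasing) (use assms in auto)
  then show ?thesis using assms by simp
qed

lemma sqrt_pow_less:
  assumes "0 < a" "a < 1" "2 < p"
  shows "sqrt a ^ p < a"
proof -
  have "sqrt a ^ p < sqrt a ^ 2"
    by (rule power_strict_decreasing) (use assms in auto)
  then show ?thesis using assms by simp
qed

lemma subsum_le1:
  fixes w :: "'q::finite \<Rightarrow> real"
  assumes "(\<Sum>k\<in>UNIV. (w k)\<^sup>2) = 1"
  shows "(\<Sum>k\<in>S. (w k)\<^sup>2) \<le> 1"
  using sum_mono2[of UNIV S "\<lambda>k. (w k)\<^sup>2"] assms by auto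

lemma Tval_le:
  fixes w :: "'q::finite \<Rightarrow> real"
  assumes "(\<Sum>k\<in>UNIV. (w k)\<^sup>2) = 1" "0 \<le> \<theta>" "\<theta> \<le> 1" "2 \<le> p"
  shows "Tval \<theta> p w \<le> \<theta>"
proof -
  have "Tval \<theta> p w \<le> (\<Sum>S\<in>Pow UNIV. Pw \<theta> UNIV S * (\<Sum>k\<in>S. (w k)\<^sup>2))"
    unfolding Tval_def
  proof (rule sum_mono)
    fix S assume "S \<in> Pow (UNIV::'q set)"
    have "sqrt (\<Sum>k\<in>S. (w k)\<^sup>2) ^ p \<le> (\<Sum>k\<in>S. (w k)\<^sup>2)"
      by (rule sqrt_pow_le[OF sum_nonneg subsum_le1[OF assms(1)]]) (use assms in auto)
    then show "Pw \<theta> UNIV S * sqrt (\<Sum>k\<in>S. (w k)\<^sup>2) ^ p \<le> Pw \<theta> UNIV S * (\<Sum>k\<in>S. (w k)\<^sup>2)"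
      by (rule mult_left_mono) (rule Pw_nonneg; use assms in auto)
  qed
  also have "\<dots> = \<theta>" using Pw_sum_lin[of UNIV \<theta> "\<lambda>k. (w k)\<^sup>2"] assms by simp
  finally show ?thesis .
qed

lemma Tval_eq_01:
  fixes w :: "'q::finite \<Rightarrow> real"
  assumes "(\<Sum>k\<in>UNIV. (w k)\<^sup>2) = 1" "0 < \<theta>" "\<theta> < 1" "2 < p" "Tval \<theta> p w = \<theta>"
  shows "\<bar>w q\<bar> = 0 \<or> \<bar>w q\<bar> = 1"
proof (rule ccontr)
  assume H: "\<not> (\<bar>w q\<bar> = 0 \<or> \<bar>w q\<bar> = 1)"
  have le1: "(w q)\<^sup>2 \<le> 1" using subsum_le1[OF assms(1), of "{q}"] by simp
  have pos: "0 < (w q)\<^sup>2" using H by simp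
  have "(w q)\<^sup>2 \<noteq> 1"
  proof
    assume "(w q)\<^sup>2 = 1"
    then have "\<bar>w q\<bar>\<^sup>2 = 1\<^sup>2" by simp
    then have "\<bar>w q\<bar> = 1" by (rule power2_eq_imp_eq) auto
    with H show False by simp
  qed
  with le1 have lt1: "(w q)\<^sup>2 < 1" by simp
  have "Tval \<theta> p w < (\<Sum>S\<in>Pow UNIV. Pw \<theta> UNIV S * (\<Sum>k\<in>S. (w k)\<^sup>2))"
    unfolding Tval_def
  proof (rule sum_strict_mono_ex1)
    show "\<forall>S\<in>Pow UNIV. Pw \<theta> UNIV S * sqrt (\<Sum>k\<in>S. (w k)\<^sup>2) ^ p \<le> Pw \<theta> UNIV S * (\<Sum>k\<in>S. (w k)\<^sup>2)"
    proof
      fix S assume "S \<in> Pow (UNIV::'q set)"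
      have "sqrt (\<Sum>k\<in>S. (w k)\<^sup>2) ^ p \<le> (\<Sum>k\<in>S. (w k)\<^sup>2)"
        by (rule sqrt_pow_le[OF sum_nonneg subsum_le1[OF assms(1)]]) (use assms in auto)
      then show "Pw \<theta> UNIV S * sqrt (\<Sum>k\<in>S. (w k)\<^sup>2) ^ p \<le> Pw \<theta> UNIV S * (\<Sum>k\<in>S. (w k)\<^sup>2)"
        by (rule mult_left_mono) (rule Pw_nonneg; use assms in auto)
    qed
    have "0 < Pw \<theta> UNIV {q}" using assms by (simp add: Pw_def)
    moreover have "sqrt ((w q)\<^sup>2) ^ p < (w q)\<^sup>2" by (rule sqrt_pow_less) (use pos lt1 assms in auto)
    ultimately show "\<exists>S\<in>Pow UNIV. Pw \<theta> UNIV S * sqrt (\<Sum>k\<in>S. (w k)\<^sup>2) ^ p < Pw \<theta> UNIV S * (\<Sum>k\<in>S. (w k)\<^sup>2)"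
      by (intro bexI[of _ "{q}"]) auto
  qed simp
  also have "\<dots> = \<theta>" using Pw_sum_lin[of UNIV \<theta> "\<lambda>k. (w k)\<^sup>2"] assms by simp
  finally show False using assms by simp
qed

lemma Tval_01:
  fixes w :: "'q::finite \<Rightarrow> real"
  assumes "(\<Sum>k\<in>UNIV. (w k)\<^sup>2) = 1" "\<And>q. \<bar>w q\<bar> = 0 \<or> \<bar>w q\<bar> = 1" "0 < p"
  shows "Tval \<theta> p w = \<theta>"
proof -
  have "\<And>S. sqrt (\<Sum>k\<in>S. (w k)\<^sup>2) ^ p = (\<Sum>k\<in>S. (w k)\<^sup>2)"
  proof -
    fix S :: "'q set"
    have "(\<Sum>k\<in>S. (w k)\<^sup>2) = 0 \<or> (\<Sum>k\<in>S. (w k)\<^sup>2) = 1"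
    proof (cases "\<exists>q\<in>S. \<bar>w q\<bar> = 1")
      case True
      then obtain q where q: "q \<in> S" "\<bar>w q\<bar> = 1" by blast
      have "(w q)\<^sup>2 \<le> (\<Sum>k\<in>S. (w k)\<^sup>2)" by (rule member_le_sum) (use q in auto)
      moreover have "(w q)\<^sup>2 = 1" using q by (metis power2_abs one_power2)
      ultimately show ?thesis using subsum_le1[OF assms(1), of S] by auto
    next
      case False
      then have "\<forall>k\<in>S. w k = 0" using assms(2) by fastforce
      then show ?thesis by simp
    qed
    then show "sqrt (\<Sum>k\<in>S. (w k)\<^sup>2) ^ p = (\<Sum>k\<in>S. (w k)\<^sup>2)" using assms(3) by auto
  qed
  then have "Tval \<theta> p w = (\<Sum>S\<in>Pow UNIV. Pw \<theta> UNIV S * (\<Sum>k\<in>S. (w k)\<^sup>2))"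
    unfolding Tval_def by simp
  also have "\<dots> = \<theta>" using Pw_sum_lin[of UNIV \<theta> "\<lambda>k. (w k)\<^sup>2"] assms by simp
  finally show ?thesis .
qed



definition wrow :: "real^'n::finite^'n \<Rightarrow> 'n \<Rightarrow> 'r \<Rightarrow> ('n \<times> 'r::finite \<Rightarrow> real)" where
  "wrow W i j = (\<lambda>q. if snd q = j then W $ i $ fst q else 0)"

lemma sum_pairs: "(\<Sum>q\<in>(UNIV::('a::finite \<times> 'b::finite) set). f q) = (\<Sum>a\<in>UNIV. \<Sum>b\<in>UNIV. f (a,b))"
  by (subst sum.cartesian_product) simp

lemma ifmult: "(if P then x else (0::real)) * y = (if P then x * y else 0)" by simp
lemma ifsq: "(if P then x else (0::real))\<^sup>2 = (if P then x\<^sup>2 else 0)" by simp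

lemma Tval_nonneg: "0 \<le> \<theta> \<Longrightarrow> \<theta> \<le> 1 \<Longrightarrow> 0 \<le> cmom p * Tval \<theta> p w"
  unfolding Tval_def using less_imp_le[OF cmom_pos[of p]]
  by (intro mult_nonneg_nonneg sum_nonneg Pw_nonneg) (auto simp: sum_nonneg)

lemma wrow_lin: "(\<Sum>q\<in>UNIV. wrow W i j q * X q) = (\<Sum>k\<in>UNIV. W $ i $ k * X (k, j))"
  unfolding sum_pairs wrow_def by (simp add: ifmult)

lemma wrow_sq: "(\<Sum>q\<in>UNIV. (wrow W i j q)\<^sup>2) = (\<Sum>k\<in>UNIV. (W $ i $ k)\<^sup>2)"
  unfolding sum_pairs wrow_def by (simp add: ifsq)

lemma entry_integral:
  fixes w :: "'q::finite \<Rightarrow> real"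
  assumes "0 \<le> \<theta>" "\<theta> \<le> 1"
  shows "(\<integral>\<^sup>+x. ennreal (\<bar>\<Sum>q\<in>UNIV. w q * x q\<bar> ^ p) \<partial>PiM UNIV (\<lambda>_. BG \<theta>)) = ennreal (cmom p * Tval \<theta> p w)"
proof -
  have "(\<integral>\<^sup>+x. ennreal (\<bar>\<Sum>q\<in>UNIV. w q * x q\<bar> ^ p) \<partial>PiM UNIV (\<lambda>_. BG \<theta>))
     = (\<Sum>S\<in>Pow UNIV. ennreal (Pw \<theta> UNIV S) * (\<integral>\<^sup>+g. ennreal (\<bar>sqrt (\<Sum>k\<in>S. (w k)\<^sup>2) * g\<bar> ^ p) \<partial>std_gaussian))"
    by (rule key[where h="\<lambda>t. ennreal (\<bar>t\<bar> ^ p)"]) (use assms in auto)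
  also have "\<dots> = (\<Sum>S\<in>Pow UNIV. ennreal (Pw \<theta> UNIV S * (sqrt (\<Sum>k\<in>S. (w k)\<^sup>2) ^ p * cmom p)))"
  proof (rule sum.cong[OF refl])
    fix S :: "'q set"
    have "0 \<le> sqrt (\<Sum>k\<in>S. (w k)\<^sup>2)" by (simp add: sum_nonneg)
    then show "ennreal (Pw \<theta> UNIV S) * (\<integral>\<^sup>+g. ennreal (\<bar>sqrt (\<Sum>k\<in>S. (w k)\<^sup>2) * g\<bar> ^ p) \<partial>std_gaussian)
      = ennreal (Pw \<theta> UNIV S * (sqrt (\<Sum>k\<in>S. (w k)\<^sup>2) ^ p * cmom p))"
      using Pw_nonneg[OF assms, of UNIV S] less_imp_le[OF cmom_pos[of p]]
      by (simp add: gauss_pow ennreal_mult)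
  qed
  also have "\<dots> = ennreal (\<Sum>S\<in>Pow UNIV. Pw \<theta> UNIV S * (sqrt (\<Sum>k\<in>S. (w k)\<^sup>2) ^ p * cmom p))"
    using assms less_imp_le[OF cmom_pos[of p]]
    by (intro sum_ennreal mult_nonneg_nonneg Pw_nonneg) (auto simp: sum_nonneg)
  also have "(\<Sum>S\<in>Pow UNIV. Pw \<theta> UNIV S * (sqrt (\<Sum>k\<in>S. (w k)\<^sup>2) ^ p * cmom p)) = cmom p * Tval \<theta> p w"
    unfolding Tval_def by (simp add: sum_distrib_left algebra_simps)
  finally show ?thesis .
qed

lemma obj_formula:
  fixes D0 A :: "real^'n::finite^'n"
  assumes "0 \<le> \<theta>" "\<theta> \<le> 1"
  shows "objective p \<theta> D0 A TYPE('r::finite) = (\<Sum>i\<in>UNIV. \<Sum>j\<in>(UNIV::'r set). cmom p * Tval \<theta> p (wrow (A ** D0) i j))"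
proof -
  let ?W = "A ** D0"
  let ?F = "\<lambda>X::'n \<times> 'r \<Rightarrow> real. \<Sum>i\<in>UNIV. \<Sum>j\<in>(UNIV::'r set). \<bar>\<Sum>q\<in>UNIV. wrow ?W i j q * X q\<bar> ^ p"
  have 1: "\<And>X. entry_pnorm_pow p (A ** (D0 ** (to_mat X :: real^'r^'n))) = ?F X"
    by (simp only: matrix_mul_assoc) (simp add: entry_pnorm_pow_def wrow_lin matrix_matrix_mult_def to_mat_def)
  have "objective p \<theta> D0 A TYPE('r) = (\<integral>X. ?F X \<partial>PiM UNIV (\<lambda>_. BG \<theta>))"
    unfolding objective_def BG_matrix_def 1 ..
  also have "\<dots> = enn2real (\<integral>\<^sup>+X. ennreal (?F X) \<partial>PiM UNIV (\<lambda>_. BG \<theta>))"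
    by (rule integral_eq_nn_integral) (auto simp: sum_nonneg)
  also have "(\<integral>\<^sup>+X. ennreal (?F X) \<partial>PiM UNIV (\<lambda>_. BG \<theta>))
      = (\<integral>\<^sup>+X. (\<Sum>i\<in>UNIV. \<Sum>j\<in>(UNIV::'r set). ennreal (\<bar>\<Sum>q\<in>UNIV. wrow ?W i j q * X q\<bar> ^ p)) \<partial>PiM UNIV (\<lambda>_. BG \<theta>))"
    by (simp add: sum_nonneg)
  also have "\<dots> = (\<Sum>i\<in>UNIV. \<Sum>j\<in>(UNIV::'r set). (\<integral>\<^sup>+X. ennreal (\<bar>\<Sum>q\<in>UNIV. wrow ?W i j q * X q\<bar> ^ p) \<partial>PiM UNIV (\<lambda>_. BG \<theta>)))"
    apply (subst nn_integral_sum)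
    apply measurable
    apply (rule sum.cong[OF refl])
    apply (subst nn_integral_sum)
    apply measurable
    done
  also have "\<dots> = (\<Sum>i\<in>UNIV. \<Sum>j\<in>(UNIV::'r set). ennreal (cmom p * Tval \<theta> p (wrow ?W i j)))"
    using assms by (simp add: entry_integral)
  also have "\<dots> = ennreal (\<Sum>i\<in>UNIV. \<Sum>j\<in>(UNIV::'r set). cmom p * Tval \<theta> p (wrow ?W i j))"
  proof -
    have "\<And>i. (\<Sum>j\<in>(UNIV::'r set). ennreal (cmom p * Tval \<theta> p (wrow ?W i j))) = ennreal (\<Sum>j\<in>(UNIV::'r set). cmom p * Tval \<theta> p (wrow ?W i j))"
      by (rule sum_ennreal) (rule Tval_nonneg[OF assms])
    then show ?thesis
      by (simp only:) (rule sum_ennreal, rule sum_nonneg, rule Tval_nonneg[OF assms])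
  qed
  finally have eq: "objective p \<theta> D0 A TYPE('r) = enn2real (ennreal (\<Sum>i\<in>UNIV. \<Sum>j\<in>(UNIV::'r set). cmom p * Tval \<theta> p (wrow ?W i j)))" .
  have nn: "0 \<le> (\<Sum>i\<in>UNIV. \<Sum>j\<in>(UNIV::'r set). cmom p * Tval \<theta> p (wrow ?W i j))"
    by (intro sum_nonneg Tval_nonneg[OF assms])
  show ?thesis unfolding eq using nn by (rule enn2real_ennreal)
qed



lemma orth_row:
  fixes W :: "real^'n::finite^'n"
  assumes "orthogonal_matrix W"
  shows "(\<Sum>k\<in>UNIV. (W $ i $ k)\<^sup>2) = 1"
proof -
  have "W ** transpose W = mat 1" using assms by (simp add: orthogonal_matrix_def)
  then have "(W ** transpose W) $ i $ i = (mat 1 :: real^'n^'n) $ i $ i" by simp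
  then show ?thesis by (simp add: matrix_matrix_mult_def transpose_def mat_def power2_eq_square)
qed

lemma orth_col:
  fixes W :: "real^'n::finite^'n"
  assumes "orthogonal_matrix W"
  shows "(\<Sum>i\<in>UNIV. (W $ i $ k)\<^sup>2) = 1"
proof -
  have "transpose W ** W = mat 1" using assms by (simp add: orthogonal_matrix_def)
  then have "(transpose W ** W) $ k $ k = (mat 1 :: real^'n^'n) $ k $ k" by simp
  then show ?thesis by (simp add: matrix_matrix_mult_def transpose_def mat_def power2_eq_square)
qed

lemma two_nonzero:
  fixes f :: "'n::finite \<Rightarrow> real"
  assumes "(\<Sum>k\<in>UNIV. (f k)\<^sup>2) = 1" "\<And>k. \<bar>f k\<bar> = 0 \<or> \<bar>f k\<bar> = 1" "f a \<noteq> 0" "f b \<noteq> 0"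
  shows "a = b"
proof (rule ccontr)
  assume ab: "a \<noteq> b"
  have sq: "\<And>k. f k \<noteq> 0 \<Longrightarrow> (f k)\<^sup>2 = 1"
    using assms(2) by (metis abs_eq_0 power2_abs one_power2)
  have "(\<Sum>k\<in>{a,b}. (f k)\<^sup>2) \<le> (\<Sum>k\<in>UNIV. (f k)\<^sup>2)"
    by (rule sum_mono2) auto
  moreover have "(\<Sum>k\<in>{a,b}. (f k)\<^sup>2) = 2" using ab sq assms(3,4) by simp
  ultimately show False using assms(1) by simp
qed

lemma orth01_sp:
  fixes W :: "real^'n::finite^'n"
  assumes orth: "orthogonal_matrix W" and e01: "\<And>i k. \<bar>W $ i $ k\<bar> = 0 \<or> \<bar>W $ i $ k\<bar> = 1"
  shows "transpose W \<in> signed_perm_matrices"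
proof -
  have ex: "\<exists>k. W $ i $ k \<noteq> 0" for i
  proof (rule ccontr)
    assume "\<not> ?thesis"
    then have "(\<Sum>k\<in>UNIV. (W $ i $ k)\<^sup>2) = 0" by simp
    then show False using orth_row[OF orth, of i] by simp
  qed
  define \<sigma> where "\<sigma> i = (SOME k. W $ i $ k \<noteq> 0)" for i
  have \<sigma>: "W $ i $ \<sigma> i \<noteq> 0" for i
    unfolding \<sigma>_def using someI_ex[OF ex[of i]] .
  have uniq: "k = \<sigma> i" if "W $ i $ k \<noteq> 0" for i k
    using two_nonzero[of "\<lambda>k. W $ i $ k", OF orth_row[OF orth] e01 that \<sigma>[of i]] .
  have inj: "inj \<sigma>"
  proof (rule injI)
    fix i i' assume "\<sigma> i = \<sigma> i'"
    then show "i = i'"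
      using two_nonzero[of "\<lambda>m. W $ m $ \<sigma> i", OF orth_col[OF orth] e01 \<sigma>[of i]] \<sigma>[of i'] by simp
  qed
  have bij: "bij \<sigma>" using inj by (simp add: bij_def finite_UNIV_inj_surj)
  have perm: "\<sigma> permutes (UNIV :: 'n set)"
    by (rule bij_imp_permutes) (use bij in \<open>auto simp: bij_def\<close>)
  define s where "s j = W $ j $ \<sigma> j" for j
  have s: "s j = 1 \<or> s j = -1" for j
    using e01[of j "\<sigma> j"] \<sigma>[of j] unfolding s_def by (auto simp: abs_if split: if_splits)
  have e: "transpose W $ i $ j = (\<chi> i j. if i = \<sigma> j then s j else 0) $ i $ j" for i j
    using uniq[of j i] by (auto simp: s_def transpose_def)
  have eq: "transpose W = (\<chi> i j. if i = \<sigma> j then s j else 0)"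
    using e by (simp add: vec_eq_iff)
  show ?thesis unfolding signed_perm_matrices_def using perm s eq by blast
qed

lemma sp_props:
  fixes P :: "real^'n::finite^'n"
  assumes "P \<in> signed_perm_matrices"
  shows "orthogonal_matrix P" "\<And>i k. \<bar>P $ i $ k\<bar> = 0 \<or> \<bar>P $ i $ k\<bar> = 1"
proof -
  obtain \<sigma> s where \<sigma>: "\<sigma> permutes (UNIV :: 'n set)" and s: "\<forall>j. s j = 1 \<or> s j = -1"
    and P: "P = (\<chi> i j. if i = \<sigma> j then s j else 0)"
    using assms unfolding signed_perm_matrices_def by blast
  have inj: "inj \<sigma>" using \<sigma> by (rule permutes_inj)
  have ss: "s a * s a = 1" for a using s[rule_format, of a] by auto
  have e: "(transpose P ** P) $ a $ b = (mat 1 :: real^'n^'n) $ a $ b" for a b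
  proof -
    have "(transpose P ** P) $ a $ b = (\<Sum>k\<in>UNIV. (if k = \<sigma> a then s a * (if k = \<sigma> b then s b else 0) else 0))"
      unfolding P by (simp add: matrix_matrix_mult_def transpose_def ifmult)
    also have "\<dots> = s a * (if \<sigma> a = \<sigma> b then s b else 0)"
      by (simp add: sum.delta)
    also have "\<dots> = (if a = b then 1 else 0)"
      using inj ss by (auto simp: inj_eq)
    finally show ?thesis by (simp add: mat_def)
  qed
  have "transpose P ** P = mat 1" using e by (simp add: vec_eq_iff)
  then show "orthogonal_matrix P" by (simp add: orthogonal_matrix)
  show "\<And>i k. \<bar>P $ i $ k\<bar> = 0 \<or> \<bar>P $ i $ k\<bar> = 1"
  proof -
    fix i k
    show "\<bar>P $ i $ k\<bar> = 0 \<or> \<bar>P $ i $ k\<bar> = 1"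
      using s[rule_format, of k] unfolding P by auto
  qed
qed

lemma sum_le_eq:
  fixes f g :: "'a \<Rightarrow> real"
  assumes "finite A" "\<And>x. x \<in> A \<Longrightarrow> f x \<le> g x" "sum f A = sum g A" "x \<in> A"
  shows "f x = g x"
proof (rule ccontr)
  assume "f x \<noteq> g x"
  then have "f x < g x" using assms(2)[OF assms(4)] by simp
  then have "sum f A < sum g A"
    using assms by (intro sum_strict_mono_ex1) auto
  then show False using assms(3) by simp
qed



theorem lemma1:
  fixes p :: nat and \<theta> :: real and D0 :: "real^'n::finite^'n"
  assumes "p > 2" and "0 < \<theta>" and "\<theta> < 1" and "orthogonal_matrix D0"
  shows "{A. orthogonal_matrix A \<and>
             (\<forall>B. orthogonal_matrix B \<longrightarrow>
                  objective p \<theta> D0 B TYPE('r::finite) \<le> objective p \<theta> D0 A TYPE('r))}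
         = {A. \<exists>P\<in>signed_perm_matrices. transpose A = D0 ** P}"
proof -
  have th: "0 \<le> \<theta>" "\<theta> \<le> 1" using assms by auto
  have c0: "0 < cmom p" by (rule cmom_pos)
  define obj where "obj B = objective p \<theta> D0 B TYPE('r)" for B
  define bound where "bound = (\<Sum>i\<in>(UNIV::'n set). \<Sum>j\<in>(UNIV::'r set). cmom p * \<theta>)"
  have objf: "obj B = (\<Sum>i\<in>UNIV. \<Sum>j\<in>(UNIV::'r set). cmom p * Tval \<theta> p (wrow (B ** D0) i j))" for B
    unfolding obj_def by (rule obj_formula[OF th])
  have rowW: "(\<Sum>q\<in>UNIV. (wrow (B ** D0) i (j::'r) q)\<^sup>2) = 1" if "orthogonal_matrix B" for B i j
    unfolding wrow_sq using orth_row[OF orthogonal_matrix_mul[OF that assms(4)]] .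
  have le: "obj B \<le> bound" if "orthogonal_matrix B" for B
    unfolding objf bound_def
    by (intro sum_mono mult_left_mono Tval_le[OF rowW[OF that] th] less_imp_le[OF c0]) (use assms in auto)
  have eqb: "obj B = bound" if "orthogonal_matrix B" "\<And>i k. \<bar>(B ** D0) $ i $ k\<bar> = 0 \<or> \<bar>(B ** D0) $ i $ k\<bar> = 1" for B
  proof -
    have "Tval \<theta> p (wrow (B ** D0) i j) = \<theta>" for i and j :: 'r
      by (rule Tval_01[OF rowW[OF that(1)]]) (use that(2) assms in \<open>auto simp: wrow_def\<close>)
    then show ?thesis unfolding objf bound_def by simp
  qed
  have maxchar: "\<bar>(B ** D0) $ i $ k\<bar> = 0 \<or> \<bar>(B ** D0) $ i $ k\<bar> = 1"
    if B: "orthogonal_matrix B" "obj B = bound" for B i k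
  proof -
    let ?f = "\<lambda>i j. cmom p * Tval \<theta> p (wrow (B ** D0) i j)"
    have tle: "?f i j \<le> cmom p * \<theta>" for i and j :: 'r
      by (intro mult_left_mono Tval_le[OF rowW[OF B(1)] th] less_imp_le[OF c0]) (use assms in auto)
    have outer: "(\<Sum>i\<in>UNIV. \<Sum>j\<in>(UNIV::'r set). ?f i j) = (\<Sum>i\<in>(UNIV::'n set). \<Sum>j\<in>(UNIV::'r set). cmom p * \<theta>)"
      using B(2) unfolding objf bound_def .
    have inner: "(\<Sum>j\<in>(UNIV::'r set). ?f i j) = (\<Sum>j\<in>(UNIV::'r set). cmom p * \<theta>)"
      by (rule sum_le_eq[of UNIV "\<lambda>i. \<Sum>j\<in>(UNIV::'r set). ?f i j" "\<lambda>i. \<Sum>j\<in>(UNIV::'r set). cmom p * \<theta>" i])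
         (simp, rule sum_mono, rule tle, rule outer, simp)
    have "?f i j = cmom p * \<theta>" for j :: 'r
      by (rule sum_le_eq[of UNIV "\<lambda>j. ?f i j" "\<lambda>j. cmom p * \<theta>" j]) (use inner tle in auto)
    then have "Tval \<theta> p (wrow (B ** D0) i (undefined::'r)) = \<theta>" using c0 by simp
    from Tval_eq_01[OF rowW[OF B(1)] assms(2,3,1) this, of "(k, undefined)"]
    show ?thesis by (simp add: wrow_def)
  qed
  have B0: "orthogonal_matrix (transpose D0)" using assms(4) by simp
  have B0D: "transpose D0 ** D0 = mat 1" using assms(4) by (simp add: orthogonal_matrix_def)
  have objB0: "obj (transpose D0) = bound"
    by (rule eqb[OF B0]) (simp add: B0D mat_def)
  show ?thesis
  proof (intro set_eqI iffI)
    fix A assume "A \<in> {A. orthogonal_matrix A \<and>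
             (\<forall>B. orthogonal_matrix B \<longrightarrow>
                  objective p \<theta> D0 B TYPE('r::finite) \<le> objective p \<theta> D0 A TYPE('r))}"
    then have A: "orthogonal_matrix A" "\<And>B. orthogonal_matrix B \<Longrightarrow> obj B \<le> obj A"
      unfolding obj_def by auto
    have "obj A = bound" using A(2)[OF B0] objB0 le[OF A(1)] by simp
    then have e01: "\<bar>(A ** D0) $ i $ k\<bar> = 0 \<or> \<bar>(A ** D0) $ i $ k\<bar> = 1" for i k
      using maxchar[OF A(1)] by blast
    have oW: "orthogonal_matrix (A ** D0)" by (rule orthogonal_matrix_mul[OF A(1) assms(4)])
    have sp: "transpose (A ** D0) \<in> signed_perm_matrices" by (rule orth01_sp[OF oW e01])
    have DD: "D0 ** transpose D0 = mat 1" using assms(4) by (simp add: orthogonal_matrix_def)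
    have "A = (A ** D0) ** transpose D0" by (simp add: matrix_mul_assoc[symmetric] DD)
    then have "transpose A = D0 ** transpose (A ** D0)"
      by (metis matrix_transpose_mul transpose_transpose)
    with sp show "A \<in> {A. \<exists>P\<in>signed_perm_matrices. transpose A = D0 ** P}" by blast
  next
    fix A assume "A \<in> {A. \<exists>P\<in>signed_perm_matrices. transpose A = D0 ** P}"
    then obtain P where P: "P \<in> signed_perm_matrices" "transpose A = D0 ** P" by blast
    have AP: "A = transpose P ** transpose D0"
      by (metis P(2) matrix_transpose_mul transpose_transpose)
    have oP: "orthogonal_matrix P" by (rule sp_props(1)[OF P(1)])
    have oA: "orthogonal_matrix A" unfolding AP
      by (rule orthogonal_matrix_mul) (use oP assms(4) in simp_all)
    have W: "A ** D0 = transpose P" unfolding AP by (simp add: matrix_mul_assoc[symmetric] B0D)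
    have "obj A = bound"
      by (rule eqb[OF oA]) (use sp_props(2)[OF P(1)] in \<open>simp add: W transpose_def\<close>)
    then have "\<forall>B. orthogonal_matrix B \<longrightarrow> obj B \<le> obj A" using le by simp
    with oA show "A \<in> {A. orthogonal_matrix A \<and>
             (\<forall>B. orthogonal_matrix B \<longrightarrow>
                  objective p \<theta> D0 B TYPE('r::finite) \<le> objective p \<theta> D0 A TYPE('r))}"
      unfolding obj_def by simp
  qed
qed


end
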